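(* Let $\alpha_0>0$, let $N\ge 1$ be an integer, and let $\gamma_1,\dots,\gamma_N$ be distinct positive real numbers. Then: (i) The determinant \[ \Delta_N(\gamma_1,\dots,\gamma_N)=\det\left(1,\ \frac{(\gamma_\sigma)_1}{(\gamma_\sigma+\alpha_0)_1},\ \dots,\ \frac{(\gamma_\sigma)_{N-1}}{(\gamma_\sigma+\alpha_0)_{N-1}}\right)_{\sigma=1,\dots,N} \] (the $\sigma$-th row being the displayed vector) is nonzero. (ii) The linear system \[ 1+\frac{(\gamma_\sigma)_1}{(\gamma_\sigma+\alpha_0)_1}b_1+\cdots+\frac{(\gamma_\sigma)_N}{(\gamma_\sigma+\alpha_0)_N}b_N=0,\qquad \sigma=1,\dots,N, \] in the unknowns $b_1,\dots,b_N$ has a unique solution, given by \[ b_{k+1}=\sum_{\ell=k}^{N-1}(-1)^{\ell+1}\frac{(\alpha_0-1)_{\ell-k}}{(\ell-k)!}\,\frac{(\alpha_0+\ell+1)_{N-\ell-1}}{(N-\ell-1)!}\prod_{\sigma=1}^N\frac{\gamma_\sigma+\alpha_0+\ell}{\gamma_\sigma},\qquad k=0,1,\dots,N-1. \] (iii) If $\gamma_0>0$ and $\gamma_0\neq\gamma_\sigma$ for $\sigma=1,\dots,N$, then with the $b_k$ from (ii), \[ 1+\frac{(\gamma_0)_1}{(\gamma_0+\alpha_0)_1}b_1+\cdots+\frac{(\gamma_0)_N}{(\gamma_0+\alpha_0)_N}b_N\neq 0. \]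
   Context: Pochhammer symbol: $(x)_0=1$ and $(x)_n=x(x+1)\cdots(x+n-1)$ for $n\ge1$. *)

theory Defs
  imports Complex_Main "Jordan_Normal_Form.Determinant"
begin

text \<open>The matrix of part (i): row sigma (sigma = 1..N, stored at index sigma-1)
  is (1, (g_sigma)_1/(g_sigma+a0)_1, ..., (g_sigma)_{N-1}/(g_sigma+a0)_{N-1}).\<close>
definition Delta_mat :: "real \<Rightarrow> nat \<Rightarrow> (nat \<Rightarrow> real) \<Rightarrow> real mat" where
  "Delta_mat a0 N g = mat N N (\<lambda>(i, j). pochhammer (g (i + 1)) j / pochhammer (g (i + 1) + a0) j)"

text \<open>The explicit solution b_{k+1}, k = 0..N-1.\<close>
definition bsol :: "real \<Rightarrow> nat \<Rightarrow> (nat \<Rightarrow> real) \<Rightarrow> nat \<Rightarrow> real" where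
  "bsol a0 N g k = (\<Sum>l = k..N - 1. (-1) ^ (l + 1)
       * (pochhammer (a0 - 1) (l - k) / fact (l - k))
       * (pochhammer (a0 + real l + 1) (N - l - 1) / fact (N - l - 1))
       * (\<Prod>s = 1..N. (g s + a0 + real l) / g s))"

definition lin_form :: "real \<Rightarrow> nat \<Rightarrow> (nat \<Rightarrow> real) \<Rightarrow> real \<Rightarrow> real" where
  "lin_form a0 N b x = 1 + (\<Sum>k = 1..N. pochhammer x k / pochhammer (x + a0) k * b k)"

end

theory Submission imports Defs "HOL-Computational_Algebra.Formal_Power_Series" "HOL-Computational_Algebra.Polynomial" begin

lemma poly_pochhammer: "poly (pochhammer p n) x = pochhammer (poly p x) n"
  by (induction n) (simp_all add: pochhammer_Suc)

lemma degree_pochhammer_le: "degree (pochhammer [:c, 1:] n) \<le> n"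
proof (induction n)
  case 0 then show ?case by simp
next
  case (Suc n)
  have "degree (pochhammer [:c, 1:] n * ([:c, 1:] + of_nat n)) \<le> degree (pochhammer [:c, 1:] n) + degree ([:c, 1:] + of_nat n)"
    by (rule degree_mult_le)
  also have "degree ([:c, 1:] + (of_nat n :: 'a poly)) \<le> 1"
    by (rule degree_add_le) (auto simp: of_nat_poly)
  finally show ?case using Suc by (simp add: pochhammer_Suc)
qed

lemma poly_many_roots:
  fixes p :: "real poly"
  assumes "degree p \<le> M" "finite S" "card S \<ge> Suc M" "\<And>x. x \<in> S \<Longrightarrow> poly p x = 0"
  shows "poly p y = 0"
proof (rule ccontr)
  assume "poly p y \<noteq> 0"
  then have p0: "p \<noteq> 0" by auto
  have "card S \<le> card {x. poly p x = 0}"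
    using assms(4) by (intro card_mono poly_roots_finite[OF p0]) auto
  also have "\<dots> \<le> degree p" by (rule card_poly_roots_bound[OF p0])
  finally show False using assms by simp
qed

lemma poch_div_fact_gchoose: "pochhammer (x::real) k / fact k = (-1)^k * ((-x) gchoose k)"
  by (simp add: gbinomial_pochhammer)

lemma vandermonde_poch:
  "(\<Sum>j=0..n. pochhammer (x::real) (n-j) / fact (n-j) * (pochhammer y j / fact j))
     = pochhammer (x+y) n / fact n"
proof -
  have "(\<Sum>j=0..n. pochhammer x (n-j) / fact (n-j) * (pochhammer y j / fact j))
      = (\<Sum>j=0..n. (-1)^n * (((-y) gchoose j) * ((-x) gchoose (n-j))))"
  proof (rule sum.cong)
    fix j assume "j \<in> {0..n}"
    then have "(-1::real)^(n-j) * (-1)^j = (-1)^n" by (simp flip: power_add)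
    then show "pochhammer x (n-j) / fact (n-j) * (pochhammer y j / fact j)
        = (-1)^n * (((-y) gchoose j) * ((-x) gchoose (n-j)))"
      unfolding poch_div_fact_gchoose by (metis (no_types, lifting) mult.commute mult.left_commute)
  qed simp
  also have "\<dots> = (-1)^n * ((-y) + (-x) gchoose n)"
    by (simp add: sum_distrib_left[symmetric] gbinomial_Vandermonde)
  also have "\<dots> = pochhammer (x+y) n / fact n"
    by (simp add: poch_div_fact_gchoose add.commute)
  finally show ?thesis .
qed

definition Bp :: "real \<Rightarrow> nat \<Rightarrow> nat \<Rightarrow> real poly" where
  "Bp a M k = pochhammer [:0, 1:] k * pochhammer [:a + of_nat k, 1:] (M - k)"

lemma poly_Bp: "poly (Bp a M k) x = pochhammer x k * pochhammer (x + a + of_nat k) (M - k)"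
  by (simp add: Bp_def poly_pochhammer add.commute add.left_commute)

lemma degree_Bp: assumes "k \<le> M" shows "degree (Bp a M k) \<le> M"
  using assms unfolding Bp_def using degree_mult_le[of "pochhammer [:0, 1:] k" "pochhammer [:a + of_nat k, 1:] (M - k)"]
    degree_pochhammer_le[of "0::real" k] degree_pochhammer_le[of "a + of_nat k" "M - k"] by linarith

lemma ratio_Bp:
  assumes "pochhammer (x + a) M \<noteq> (0::real)" "k \<le> M"
  shows "pochhammer x k / pochhammer (x + a) k * pochhammer (x + a) M = poly (Bp a M k) x"
proof -
  have e: "pochhammer (x + a) M = pochhammer (x + a) k * pochhammer (x + a + of_nat k) (M - k)"
    using pochhammer_product[OF assms(2), of "x+a"] by simp
  then have "pochhammer (x + a) k \<noteq> 0" using assms by auto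
  then show ?thesis unfolding poly_Bp e by simp
qed

lemma kernel:
  fixes a :: real and c :: "nat \<Rightarrow> real"
  assumes a: "a > 0" and S: "finite S" "card S \<ge> Suc M" and Snn: "\<And>x. x \<in> S \<Longrightarrow> x \<ge> 0"
    and z: "\<And>x. x \<in> S \<Longrightarrow> (\<Sum>k\<le>M. c k * (pochhammer x k / pochhammer (x + a) k)) = 0"
  shows "\<forall>k\<le>M. c k = 0"
proof -
  define p where "p = (\<Sum>k\<le>M. smult (c k) (Bp a M k))"
  have dp: "degree p \<le> M" unfolding p_def
    by (intro degree_sum_le) (auto intro: order.trans[OF degree_smult_le] degree_Bp)
  have pS: "poly p x = 0" if "x \<in> S" for x
  proof -
    have "pochhammer (x + a) M > 0" using Snn[OF that] a by (intro pochhammer_pos) simp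
    then have "poly p x = (\<Sum>k\<le>M. c k * (pochhammer x k / pochhammer (x + a) k)) * pochhammer (x + a) M"
      unfolding p_def poly_sum sum_distrib_right
      by (intro sum.cong refl) (simp add: ratio_Bp[symmetric])
    then show ?thesis using z[OF that] by simp
  qed
  have pall: "poly p y = 0" for y by (rule poly_many_roots[OF dp S pS])
  have "j \<le> M \<longrightarrow> c j = 0" for j
  proof (induction j rule: less_induct)
    case (less j)
    show ?case
    proof
      assume jM: "j \<le> M"
      have "poly p (- of_nat j) = (\<Sum>k\<le>M. if k = j then c j * (pochhammer (- of_nat j) j * pochhammer a (M - j)) else 0)"
        unfolding p_def poly_sum
      proof (intro sum.cong refl)
        fix k assume k: "k \<in> {..M}"
        show "poly (smult (c k) (Bp a M k)) (- of_nat j) = (if k = j then c j * (pochhammer (- of_nat j) j * pochhammer a (M - j)) else 0)"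
        proof (cases "k < j")
          case True then show ?thesis using less.IH k by auto
        next
          case False
          show ?thesis
          proof (cases "k = j")
            case True then show ?thesis by (simp add: poly_Bp)
          next
            case False
            with \<open>\<not> k < j\<close> have "j < k" by simp
            then have "pochhammer (- of_nat j :: real) k = 0" by (auto simp: pochhammer_eq_0_iff)
            then show ?thesis using False by (simp add: poly_Bp)
          qed
        qed
      qed
      also have "\<dots> = c j * (pochhammer (- of_nat j) j * pochhammer a (M - j))"
        using jM by simp
      finally have e: "c j * (pochhammer (- of_nat j) j * pochhammer a (M - j)) = 0" using pall by simp
      have "pochhammer (- of_nat j :: real) j \<noteq> 0" by (auto simp: pochhammer_eq_0_iff)
      moreover have "pochhammer a (M - j) \<noteq> 0" using a pochhammer_pos[of a "M - j"] by simp
      ultimately show "c j = 0" using e by simp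
    qed
  qed
  then show ?thesis by blast
qed

definition vv :: "real \<Rightarrow> nat \<Rightarrow> nat \<Rightarrow> nat \<Rightarrow> real" where
  "vv a N k l = (-1) ^ (l + 1) * (pochhammer (a - 1) (l - k) / fact (l - k))
       * (pochhammer (a + real l + 1) (N - l - 1) / fact (N - l - 1))"

lemma poch_nat_succ: "pochhammer (real j + 1) r = fact (j + r) / fact j"
proof -
  have "fact (j + r) = (pochhammer 1 (j + r) :: real)" by (simp add: pochhammer_fact)
  also have "\<dots> = pochhammer 1 j * pochhammer (1 + real j) r" by (simp add: pochhammer_product')
  also have "\<dots> = fact j * pochhammer (real j + 1) r" by (simp add: pochhammer_fact add.commute)
  finally have "fact (j + r) = fact j * pochhammer (real j + 1) r" .
  then show ?thesis by simp
qed

lemma identI: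
  assumes lN: "l < N" and l'N: "l' < N"
  shows "(\<Sum>m\<in>{1..l'+1}. vv a N (m-1) l' * (pochhammer (- a - real l) m * pochhammer (real m - real l) (N - m)))
       = (if l = l' then pochhammer a N else 0)"
proof (cases "l' < l")
  case True
  have "pochhammer (real m - real l) (N - m) = 0" if "m \<in> {1..l'+1}" for m
  proof -
    have "m \<le> l" using that True by auto
    then have e1: "real m - real l = - of_nat (l - m)" and e2: "l - m < N - m" using lN by auto
    show ?thesis by (subst pochhammer_eq_0_iff, rule exI[of _ "l-m"], rule conjI, fact e2, fact e1)
  qed
  then show ?thesis using True by simp
next
  case False
  define n where "n = l' - l"
  have l': "l' = l + n" using False n_def by simp
  define C where "C = pochhammer (a + real l' + 1) (N - l' - 1) / fact (N - l' - 1)"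
  define K where "K = (-1) ^ (l' + 1) * C * ((-1) ^ (l + 1) * pochhammer a (l + 1)) * fact (N - l - 1)"
  define f where "f m = vv a N (m-1) l' * (pochhammer (- a - real l) m * pochhammer (real m - real l) (N - m))" for m
  have "(\<Sum>m\<in>{1..l'+1}. f m) = (\<Sum>m\<in>{l+1..l'+1}. f m)"
  proof (rule sum.mono_neutral_right)
    show "\<forall>m\<in>{1..l'+1} - {l+1..l'+1}. f m = 0"
    proof
      fix m assume "m \<in> {1..l'+1} - {l+1..l'+1}"
      then have "m \<le> l" by auto
      then have e1: "real m - real l = - of_nat (l - m)" and e2: "l - m < N - m" using lN by auto
      have "pochhammer (real m - real l) (N - m) = 0"
        by (subst pochhammer_eq_0_iff, rule exI[of _ "l-m"], rule conjI, fact e2, fact e1)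
      then show "f m = 0" unfolding f_def by simp
    qed
  qed auto
  also have "\<dots> = (\<Sum>j=0..n. f (j + (l + 1)))"
    using sum.shift_bounds_cl_nat_ivl[of f 0 "l+1" n] l' by (simp add: add.commute)
  also have "\<dots> = (\<Sum>j=0..n. K * (pochhammer (a - 1) (n - j) / fact (n - j) * (pochhammer (1 - a) j / fact j)))"
  proof (rule sum.cong[OF refl])
    fix j assume j: "j \<in> {0..n}"
    have v: "vv a N (j + (l + 1) - 1) l' = (-1) ^ (l' + 1) * (pochhammer (a - 1) (n - j) / fact (n - j)) * C"
      unfolding vv_def C_def using j l' by (simp add: algebra_simps)
    have p1: "pochhammer (- a - real l) (j + (l + 1)) = (-1) ^ (l + 1) * pochhammer a (l + 1) * pochhammer (1 - a) j"
    proof -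
      have "pochhammer (- a - real l) ((l + 1) + j) = pochhammer (- a - real l) (l + 1) * pochhammer (- a - real l + of_nat (l + 1)) j"
        by (rule pochhammer_product')
      moreover have "pochhammer (- a - real l) (l + 1) = (-1) ^ (l + 1) * pochhammer a (l + 1)"
        using pochhammer_minus[of "a + real l" "l + 1"] by (simp add: algebra_simps)
      ultimately show ?thesis by (simp add: add.commute)
    qed
    have p2: "pochhammer (real (j + (l + 1)) - real l) (N - (j + (l + 1))) = fact (N - l - 1) / fact j"
    proof -
      have "real (j + (l + 1)) - real l = real j + 1" by simp
      moreover have "j + (N - (j + (l + 1))) = N - l - 1" using j l' l'N by simp
      ultimately show ?thesis using poch_nat_succ[of j "N - (j + (l + 1))"] by (simp only:)
    qed
    show "f (j + (l + 1)) = K * (pochhammer (a - 1) (n - j) / fact (n - j) * (pochhammer (1 - a) j / fact j))"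
      unfolding f_def v p1 p2 K_def by (simp add: field_simps)
  qed
  also have "\<dots> = K * (pochhammer 0 n / fact n)"
    using vandermonde_poch[of "a - 1" n "1 - a"] by (simp only: sum_distrib_left[symmetric]) simp
  also have "\<dots> = (if l = l' then pochhammer a N else 0)"
  proof (cases "n = 0")
    case True
    then have ll: "l' = l" using l' by simp
    have "pochhammer a N = pochhammer a (l + 1) * pochhammer (a + real (l + 1)) (N - (l + 1))"
      using pochhammer_product[of "l + 1" N a] lN by simp
    moreover have "(-1::real)^(l+1) * (-1)^(l+1) = 1" by (simp flip: power_mult_distrib)
    ultimately have "K = pochhammer a N" unfolding K_def C_def ll
      by (simp add: field_simps)
    then show ?thesis using True ll by simp
  next
    case False
    then show ?thesis using l' by (simp add: pochhammer_0_left)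
  qed
  finally show ?thesis unfolding f_def .
qed

lemma bsol_vv: "bsol a0 N g k = (\<Sum>l = k..N - 1. vv a0 N k l * (\<Prod>s = 1..N. (g s + a0 + real l) / g s))"
  unfolding bsol_def vv_def by simp

lemma main_poly:
  fixes a0 :: real and N :: nat and g :: "nat \<Rightarrow> real"
  assumes a0: "a0 > 0" and N: "N \<ge> 1" and gpos: "\<And>s. s \<in> {1..N} \<Longrightarrow> g s > 0"
  shows "poly (Bp a0 N 0 + (\<Sum>m\<in>{1..N}. smult (bsol a0 N g (m-1)) (Bp a0 N m))) x
       = pochhammer a0 N / (\<Prod>s\<in>{1..N}. g s) * (\<Prod>s\<in>{1..N}. g s - x)"
proof -
  define Qp where "Qp = Bp a0 N 0 + (\<Sum>m\<in>{1..N}. smult (bsol a0 N g (m-1)) (Bp a0 N m))"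
  define G where "G = (\<Prod>s\<in>{1..N}. g s)"
  define Pp where "Pp = smult (pochhammer a0 N / G) (\<Prod>s\<in>{1..N}. [:g s, -1:])"
  define pi where "pi l = (\<Prod>s = 1..N. (g s + a0 + real l) / g s)" for l :: nat
  have G0: "G > 0" unfolding G_def using gpos by (intro prod_pos) auto
  have polyP: "poly Pp y = pochhammer a0 N / G * (\<Prod>s\<in>{1..N}. g s - y)" for y
    unfolding Pp_def by (simp add: poly_prod)
  have dQ: "degree Qp \<le> N" unfolding Qp_def
    by (intro degree_add_le degree_Bp degree_sum_le) (auto intro: order.trans[OF degree_smult_le] degree_Bp)
  have dP: "degree Pp \<le> N"
  proof -
    have "degree (\<Prod>s\<in>{1..N}. [:g s, -1:]) \<le> sum (degree \<circ> (\<lambda>s. [:g s, -1:])) {1..N}"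
      by (rule degree_prod_sum_le) simp
    also have "\<dots> = N" by simp
    finally show ?thesis unfolding Pp_def using degree_smult_le order.trans by blast
  qed
  define S where "S = insert 0 ((\<lambda>l. - a0 - real l) ` {..<N})"
  have finS: "finite S" unfolding S_def by simp
  have cardS: "card S \<ge> Suc N"
  proof -
    have "0 \<notin> (\<lambda>l. - a0 - real l) ` {..<N}" using a0 by auto
    moreover have "inj_on (\<lambda>l. - a0 - real l) {..<N}" by (auto simp: inj_on_def)
    ultimately show ?thesis unfolding S_def by (simp add: card_image)
  qed
  have at0: "poly Qp 0 = poly Pp 0"
  proof -
    have "poly Qp 0 = pochhammer a0 N"
      unfolding Qp_def by (simp add: poly_sum poly_Bp pochhammer_0_left)
    moreover have "poly Pp 0 = pochhammer a0 N / G * G" unfolding polyP G_def by simp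
    then have "poly Pp 0 = pochhammer a0 N" using G0 by simp
    ultimately show ?thesis by simp
  qed
  have atl: "poly Qp (- a0 - real l) = poly Pp (- a0 - real l)" if lN: "l < N" for l
  proof -
    have "poly Pp (- a0 - real l) = pochhammer a0 N / G * (\<Prod>s\<in>{1..N}. g s + a0 + real l)"
      unfolding polyP by (simp add: algebra_simps)
    also have "\<dots> = pochhammer a0 N * pi l" unfolding pi_def G_def by (simp add: prod_dividef)
    finally have eP: "poly Pp (- a0 - real l) = pochhammer a0 N * pi l" .
    define B where "B m = pochhammer (- a0 - real l) m * pochhammer (real m - real l) (N - m)" for m
    have pB: "poly (Bp a0 N m) (- a0 - real l) = B m" for m
      unfolding poly_Bp B_def by (simp add: algebra_simps)
    have B0: "B 0 = 0"
    proof -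
      have "pochhammer (- real l) N = 0"
        by (subst pochhammer_eq_0_iff, rule exI[of _ l], rule conjI, rule lN, simp)
      then show ?thesis unfolding B_def by simp
    qed
    have "poly Qp (- a0 - real l) = (\<Sum>m\<in>{1..N}. bsol a0 N g (m-1) * B m)"
      unfolding Qp_def by (simp add: poly_sum pB B0)
    also have "\<dots> = (\<Sum>m\<in>{1..N}. \<Sum>l'\<in>{l'\<in>{..<N}. m - 1 \<le> l'}. vv a0 N (m-1) l' * pi l' * B m)"
    proof (rule sum.cong[OF refl])
      fix m assume m: "m \<in> {1..N}"
      have "{l'\<in>{..<N}. m - 1 \<le> l'} = {m-1..N-1}" using m N by auto
      then show "bsol a0 N g (m-1) * B m = (\<Sum>l'\<in>{l'\<in>{..<N}. m - 1 \<le> l'}. vv a0 N (m-1) l' * pi l' * B m)"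
        unfolding bsol_vv pi_def by (simp add: sum_distrib_right)
    qed
    also have "\<dots> = (\<Sum>l'\<in>{..<N}. \<Sum>m | m \<in> {1..N} \<and> m - 1 \<le> l'. vv a0 N (m-1) l' * pi l' * B m)"
      by (rule sum.swap_restrict) auto
    also have "\<dots> = (\<Sum>l'\<in>{..<N}. pi l' * (if l = l' then pochhammer a0 N else 0))"
    proof (rule sum.cong[OF refl])
      fix l' assume l': "l' \<in> {..<N}"
      have "{m. m \<in> {1..N} \<and> m - 1 \<le> l'} = {1..l'+1}" using l' by auto
      then have "(\<Sum>m | m \<in> {1..N} \<and> m - 1 \<le> l'. vv a0 N (m-1) l' * pi l' * B m)
          = pi l' * (\<Sum>m\<in>{1..l'+1}. vv a0 N (m-1) l' * B m)"
        unfolding sum_distrib_left by (rule sum.cong) (simp_all add: mult_ac)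
      also have "\<dots> = pi l' * (if l = l' then pochhammer a0 N else 0)"
        unfolding B_def using identI[OF lN, of l' a0] l' by simp
      finally show "(\<Sum>m | m \<in> {1..N} \<and> m - 1 \<le> l'. vv a0 N (m-1) l' * pi l' * B m)
          = pi l' * (if l = l' then pochhammer a0 N else 0)" .
    qed
    also have "\<dots> = pochhammer a0 N * pi l"
      using lN by (simp add: if_distrib mult.commute cong: if_cong)
    finally show ?thesis using eP by simp
  qed
  have "poly (Qp - Pp) x = 0"
  proof (rule poly_many_roots[OF _ finS cardS])
    show "degree (Qp - Pp) \<le> N" using dQ dP degree_diff_le by blast
    fix y assume "y \<in> S"
    then show "poly (Qp - Pp) y = 0" unfolding S_def using at0 atl by auto
  qed
  then show ?thesis using polyP[of x] unfolding Qp_def G_def by simp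
qed

lemma linform_poly:
  assumes "pochhammer (x + a0) N \<noteq> (0::real)"
  shows "lin_form a0 N b x * pochhammer (x + a0) N = poly (Bp a0 N 0 + (\<Sum>m\<in>{1..N}. smult (b m) (Bp a0 N m))) x"
proof -
  have "lin_form a0 N b x * pochhammer (x + a0) N
      = pochhammer (x + a0) N + (\<Sum>k = 1..N. pochhammer x k / pochhammer (x + a0) k * b k * pochhammer (x + a0) N)"
    unfolding lin_form_def by (simp add: distrib_right sum_distrib_right)
  also have "\<dots> = poly (Bp a0 N 0) x + (\<Sum>k = 1..N. b k * poly (Bp a0 N k) x)"
  proof -
    have "pochhammer (x + a0) N = poly (Bp a0 N 0) x" by (simp add: poly_Bp)
    moreover have "(\<Sum>k = 1..N. pochhammer x k / pochhammer (x + a0) k * b k * pochhammer (x + a0) N)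
        = (\<Sum>k = 1..N. b k * poly (Bp a0 N k) x)"
    proof (rule sum.cong[OF refl])
      fix k assume "k \<in> {1..N}"
      then have "k \<le> N" by simp
      note e = ratio_Bp[OF assms this]
      show "pochhammer x k / pochhammer (x + a0) k * b k * pochhammer (x + a0) N
        = b k * poly (Bp a0 N k) x" by (subst e[symmetric]) (simp only: mult_ac)
    qed
    ultimately show ?thesis by simp
  qed
  also have "\<dots> = poly (Bp a0 N 0 + (\<Sum>m\<in>{1..N}. smult (b m) (Bp a0 N m))) x"
    by (simp add: poly_sum)
  finally show ?thesis .
qed

theorem lemma1:
  fixes a0 :: real and N :: nat and g :: "nat \<Rightarrow> real"
  assumes a0: "a0 > 0"
    and N: "N \<ge> 1"
    and gpos: "\<And>s. s \<in> {1..N} \<Longrightarrow> g s > 0"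
    and gdist: "inj_on g {1..N}"
  shows "det (Delta_mat a0 N g) \<noteq> 0
    \<and> (\<forall>b :: nat \<Rightarrow> real.
           (\<forall>s \<in> {1..N}. lin_form a0 N b (g s) = 0)
           \<longleftrightarrow> (\<forall>k < N. b (k + 1) = bsol a0 N g k))
    \<and> (\<forall>g0 :: real. g0 > 0 \<longrightarrow> (\<forall>s \<in> {1..N}. g0 \<noteq> g s) \<longrightarrow>
           lin_form a0 N (\<lambda>k. bsol a0 N g (k - 1)) g0 \<noteq> 0)"
proof -
  define G where "G = (\<Prod>s\<in>{1..N}. g s)"
  have G0: "G > 0" unfolding G_def using gpos by (intro prod_pos) auto
  have ppos: "pochhammer (x + a0) n > 0" if "x \<ge> 0" for x n
    using that a0 by (intro pochhammer_pos) simp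
  have LF: "lin_form a0 N (\<lambda>k. bsol a0 N g (k - 1)) x
      = pochhammer a0 N / G * (\<Prod>s\<in>{1..N}. g s - x) / pochhammer (x + a0) N" if "x \<ge> 0" for x
  proof -
    have nz: "pochhammer (x + a0) N \<noteq> 0" using ppos[where x=x and n=N] that by simp
    have e: "lin_form a0 N (\<lambda>k. bsol a0 N g (k - 1)) x * pochhammer (x + a0) N
       = pochhammer a0 N / G * (\<Prod>s\<in>{1..N}. g s - x)"
      using linform_poly[OF nz, of "\<lambda>k. bsol a0 N g (k - 1)"] main_poly[of a0 N g x, OF a0 N gpos]
      unfolding G_def by simp
    show ?thesis using e nz by (metis nonzero_mult_div_cancel_right)
  qed
  have sol: "lin_form a0 N (\<lambda>k. bsol a0 N g (k - 1)) (g s) = 0" if "s \<in> {1..N}" for s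
  proof -
    have "(\<Prod>s\<in>{1..N}. g s - g s') = 0" if "s' \<in> {1..N}" for s'
      using that by (intro prod_zero) auto
    then show ?thesis using LF[of "g s"] gpos[OF that] that by simp
  qed
  have cardg: "card (g ` {1..N}) = N" using gdist by (simp add: card_image)
  have P1: "det (Delta_mat a0 N g) \<noteq> 0"
  proof
    assume "det (Delta_mat a0 N g) = 0"
    moreover have "Delta_mat a0 N g \<in> carrier_mat N N" unfolding Delta_mat_def by simp
    ultimately obtain v where v: "v \<in> carrier_vec N" "v \<noteq> 0\<^sub>v N" "Delta_mat a0 N g *\<^sub>v v = 0\<^sub>v N"
      using det_0_iff_vec_prod_zero by blast
    have "\<forall>k\<le>N - 1. v $ k = 0"
    proof (rule kernel[OF a0, of "g ` {1..N}"])
      show "finite (g ` {1..N})" by simp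
      show "card (g ` {1..N}) \<ge> Suc (N - 1)" using cardg N by simp
      show "x \<ge> 0" if "x \<in> g ` {1..N}" for x using that gpos by force
      fix x assume "x \<in> g ` {1..N}"
      then obtain s where s: "s \<in> {1..N}" "x = g s" by auto
      define i where "i = s - 1"
      have i: "i < N" "x = g (i + 1)" using s unfolding i_def by auto
      have "(Delta_mat a0 N g *\<^sub>v v) $ i = 0" using v(3) i by simp
      moreover have "(Delta_mat a0 N g *\<^sub>v v) $ i = (\<Sum>k<N. pochhammer x k / pochhammer (x + a0) k * v $ k)"
        using i v(1) unfolding Delta_mat_def
        by (simp add: scalar_prod_def atLeast0LessThan)
      moreover have "{..N - 1} = {..<N}" using N by auto
      ultimately show "(\<Sum>k\<le>N - 1. v $ k * (pochhammer x k / pochhammer (x + a0) k)) = 0"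
        by (simp add: mult.commute)
    qed
    then have "v = 0\<^sub>v N" using v(1) N by (intro eq_vecI) auto
    with v(2) show False by simp
  qed
  have P2: "(\<forall>s \<in> {1..N}. lin_form a0 N b (g s) = 0) \<longleftrightarrow> (\<forall>k < N. b (k + 1) = bsol a0 N g k)" for b
  proof
    assume hb: "\<forall>s \<in> {1..N}. lin_form a0 N b (g s) = 0"
    define c where "c k = (if k = 0 then 0 else b k - bsol a0 N g (k - 1))" for k
    have "\<forall>k\<le>N. c k = 0"
    proof (rule kernel[OF a0, of "insert 0 (g ` {1..N})"])
      show "finite (insert 0 (g ` {1..N}))" by simp
      have "0 \<notin> g ` {1..N}" using gpos by force
      then show "card (insert 0 (g ` {1..N})) \<ge> Suc N" using cardg by simp
      show "x \<ge> 0" if "x \<in> insert 0 (g ` {1..N})" for x using that gpos by force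
      fix x assume x: "x \<in> insert 0 (g ` {1..N})"
      have "(\<Sum>k\<le>N. c k * (pochhammer x k / pochhammer (x + a0) k))
          = (\<Sum>k\<in>{1..N}. c k * (pochhammer x k / pochhammer (x + a0) k))"
        by (rule sum.mono_neutral_right) (auto simp: c_def)
      also have "\<dots> = (\<Sum>k\<in>{1..N}. pochhammer x k / pochhammer (x + a0) k * b k)
          - (\<Sum>k\<in>{1..N}. pochhammer x k / pochhammer (x + a0) k * bsol a0 N g (k - 1))"
        by (simp add: c_def sum_subtractf[symmetric] algebra_simps)
      also have "\<dots> = lin_form a0 N b x - lin_form a0 N (\<lambda>k. bsol a0 N g (k - 1)) x"
        unfolding lin_form_def by simp
      also have "\<dots> = 0"
      proof (cases "x = 0")
        case True
        then show ?thesis unfolding lin_form_def by (simp add: pochhammer_0_left)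
      next
        case False
        then obtain s where "s \<in> {1..N}" "x = g s" using x by auto
        then show ?thesis using hb sol by simp
      qed
      finally show "(\<Sum>k\<le>N. c k * (pochhammer x k / pochhammer (x + a0) k)) = 0" .
    qed
    then show "\<forall>k < N. b (k + 1) = bsol a0 N g k"
      unfolding c_def by (metis Suc_leI add_diff_cancel_right' Suc_eq_plus1 nat.distinct(1) eq_iff_diff_eq_0)
  next
    assume hb: "\<forall>k < N. b (k + 1) = bsol a0 N g k"
    have "lin_form a0 N b x = lin_form a0 N (\<lambda>k. bsol a0 N g (k - 1)) x" for x
      unfolding lin_form_def
    proof (intro arg_cong2[where f="(+)"] refl sum.cong)
      fix k assume "k \<in> {1..N}"
      then have "k - 1 < N" "k = (k - 1) + 1" by auto
      then show "pochhammer x k / pochhammer (x + a0) k * b k = pochhammer x k / pochhammer (x + a0) k * bsol a0 N g (k - 1)"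
        using hb by metis
    qed
    then show "\<forall>s \<in> {1..N}. lin_form a0 N b (g s) = 0" using sol by simp
  qed
  have P3: "lin_form a0 N (\<lambda>k. bsol a0 N g (k - 1)) g0 \<noteq> 0" if "g0 > 0" "\<forall>s \<in> {1..N}. g0 \<noteq> g s" for g0
  proof -
    have "(\<Prod>s\<in>{1..N}. g s - g0) \<noteq> 0" using that(2) by (simp add: prod_zero_iff) (metis)
    moreover have "pochhammer a0 N > 0" using a0 by (intro pochhammer_pos)
    moreover have "pochhammer (g0 + a0) N > 0" using ppos[where x=g0 and n=N] that by simp
    ultimately show ?thesis using LF[of g0] that G0 by simp
  qed
  show ?thesis using P1 P2 P3 by blast
qed

end
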